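(* Let $G,H$ be finite connected simple graphs and $\Delta$ a triangulation of $G\times H$. Then $\beta(\operatorname{Prin}(G)\times\operatorname{Prin}(H))\subseteq\operatorname{Prin}(\Delta)$.
   Context: Triangulated product: $\Delta$ has vertex set $V(G)\times V(H)$; horizontal edges $\{(a,b),(x,b)\}$ ($ax\in E(G)$, $b\in V(H)$); vertical edges $\{(a,b),(a,y)\}$ ($a\in V(G)$, $by\in E(H)$); for each $ax\in E(G)$, $by\in E(H)$ the square $(a,b),(x,b),(x,y),(a,y)$ is split by one chosen diagonal edge into two triangles. For a triangle $\sigma$, $\mathrm{diag}(\sigma)$ is its diagonal edge. $\alpha(e,v)=1$ if $v\in e$, $e$ diagonal; $\alpha(e,v)=|\{\text{triangles }\sigma\supset e: v\notin\mathrm{diag}(\sigma)\}|$ if $v\in e$, $e$ not diagonal; $0$ if $v\notin e$. For $\phi:V(\Delta)\to\mathbb{Z}$, $\operatorname{Div}(\phi)=\sum_{r}\big(\sum_{\sigma\supset r}\phi(\sigma\setminus r)-\sum_{v\in r}\alpha(r,v)\phi(v)\big)[r]$ (sum over edges $r$ and triangles $\sigma$; $\sigma\setminus r$ the opposite vertex); $\operatorname{Prin}(\Delta)$ is the group of all such divisors. $\operatorname{Prin}(G)\subseteq\mathbb{Z}^{V(G)}$ is the column span of the Laplacian $L(G)$ (diagonal entries $-\deg(v_i)$, off-diagonal $1$ for adjacent vertices, $0$ otherwise); similarly for $H$. $\beta(C,D)$, for $C\in\mathbb{Z}^{V(G)}$, $D\in\mathbb{Z}^{V(H)}$, is the divisor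 on $\Delta$ with value $C(a)$ on each vertical edge $\{(a,b),(a,y)\}$, $D(b)$ on each horizontal edge $\{(a,b),(x,b)\}$, and $0$ on diagonal edges. *)

theory Defs
  imports Main
begin

definition simple_graph :: "'a set \<Rightarrow> ('a \<Rightarrow> 'a \<Rightarrow> bool) \<Rightarrow> bool" where
  "simple_graph V E \<longleftrightarrow> finite V \<and> (\<forall>u v. E u v \<longrightarrow> u \<in> V \<and> v \<in> V)
     \<and> (\<forall>u v. E u v \<longrightarrow> E v u) \<and> (\<forall>u. \<not> E u u)"

definition connected_graph :: "'a set \<Rightarrow> ('a \<Rightarrow> 'a \<Rightarrow> bool) \<Rightarrow> bool" where
  "connected_graph V E \<longleftrightarrow> V \<noteq> {} \<and> (\<forall>u\<in>V. \<forall>v\<in>V. E\<^sup>*\<^sup>* u v)"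

definition degree :: "'a set \<Rightarrow> ('a \<Rightarrow> 'a \<Rightarrow> bool) \<Rightarrow> 'a \<Rightarrow> nat" where
  "degree V E v = card {w\<in>V. E v w}"

definition laplacian :: "'a set \<Rightarrow> ('a \<Rightarrow> 'a \<Rightarrow> bool) \<Rightarrow> 'a \<Rightarrow> 'a \<Rightarrow> int" where
  "laplacian V E v w = (if v = w then - int (degree V E v) else if E v w then 1 else 0)"

definition prin_graph :: "'a set \<Rightarrow> ('a \<Rightarrow> 'a \<Rightarrow> bool) \<Rightarrow> ('a \<Rightarrow> int) set" where
  "prin_graph V E = {C. \<exists>c :: 'a \<Rightarrow> int. \<forall>v. C v =
      (if v \<in> V then (\<Sum>w\<in>V. laplacian V E v w * c w) else 0)}"

text \<open>A triangulation is given by the set D of chosen diagonal edges: for each pair of edges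
  ax of G and by of H exactly one of the two diagonals of the square is chosen.\<close>
definition triangulation ::
  "'a set \<Rightarrow> ('a \<Rightarrow> 'a \<Rightarrow> bool) \<Rightarrow> 'b set \<Rightarrow> ('b \<Rightarrow> 'b \<Rightarrow> bool) \<Rightarrow> ('a \<times> 'b) set set \<Rightarrow> bool" where
  "triangulation VG EG VH EH D \<longleftrightarrow>
     D \<subseteq> {{(a,b),(x,y)} | a x b y. EG a x \<and> EH b y} \<and>
     (\<forall>a x b y. EG a x \<longrightarrow> EH b y \<longrightarrow>
        ({(a,b),(x,y)} \<in> D \<longleftrightarrow> {(x,b),(a,y)} \<notin> D))"

definition tri_vertices :: "'a set \<Rightarrow> 'b set \<Rightarrow> ('a \<times> 'b) set" where
  "tri_vertices VG VH = VG \<times> VH"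

definition horiz_edges :: "('a \<Rightarrow> 'a \<Rightarrow> bool) \<Rightarrow> 'b set \<Rightarrow> ('a \<times> 'b) set set" where
  "horiz_edges EG VH = {{(a,b),(x,b)} | a x b. EG a x \<and> b \<in> VH}"

definition vert_edges :: "'a set \<Rightarrow> ('b \<Rightarrow> 'b \<Rightarrow> bool) \<Rightarrow> ('a \<times> 'b) set set" where
  "vert_edges VG EH = {{(a,b),(a,y)} | a b y. a \<in> VG \<and> EH b y}"

definition tri_edges ::
  "'a set \<Rightarrow> ('a \<Rightarrow> 'a \<Rightarrow> bool) \<Rightarrow> 'b set \<Rightarrow> ('b \<Rightarrow> 'b \<Rightarrow> bool) \<Rightarrow> ('a \<times> 'b) set set \<Rightarrow> ('a \<times> 'b) set set" where
  "tri_edges VG EG VH EH D = horiz_edges EG VH \<union> vert_edges VG EH \<union> D"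

text \<open>Triangles: each square (a,b),(x,b),(x,y),(a,y) is split by its chosen diagonal d into
  the two triangles d \<union> {r}, r one of the two remaining corners.\<close>
definition triangles ::
  "('a \<Rightarrow> 'a \<Rightarrow> bool) \<Rightarrow> ('b \<Rightarrow> 'b \<Rightarrow> bool) \<Rightarrow> ('a \<times> 'b) set set \<Rightarrow> ('a \<times> 'b) set set" where
  "triangles EG EH D = {insert r d | r d. d \<in> D \<and> (\<exists>a x b y. EG a x \<and> EH b y \<and>
       d \<subseteq> {(a,b),(x,b),(x,y),(a,y)} \<and> r \<in> {(a,b),(x,b),(x,y),(a,y)} - d)}"

definition diag :: "('a \<times> 'b) set set \<Rightarrow> ('a \<times> 'b) set \<Rightarrow> ('a \<times> 'b) set" where
  "diag D \<sigma> = (THE d. d \<in> D \<and> d \<subseteq> \<sigma>)"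

definition alpha ::
  "('a \<Rightarrow> 'a \<Rightarrow> bool) \<Rightarrow> ('b \<Rightarrow> 'b \<Rightarrow> bool) \<Rightarrow> ('a \<times> 'b) set set \<Rightarrow> ('a \<times> 'b) set \<Rightarrow> 'a \<times> 'b \<Rightarrow> int" where
  "alpha EG EH D e v =
     (if v \<in> e then
        (if e \<in> D then 1
         else int (card {\<sigma> \<in> triangles EG EH D. e \<subseteq> \<sigma> \<and> v \<notin> diag D \<sigma>}))
      else 0)"

text \<open>Divisors on \<Delta> are integer functions on edges (zero off the edge set).\<close>
definition Div ::
  "'a set \<Rightarrow> ('a \<Rightarrow> 'a \<Rightarrow> bool) \<Rightarrow> 'b set \<Rightarrow> ('b \<Rightarrow> 'b \<Rightarrow> bool) \<Rightarrow> ('a \<times> 'b) set set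
   \<Rightarrow> ('a \<times> 'b \<Rightarrow> int) \<Rightarrow> ('a \<times> 'b) set \<Rightarrow> int" where
  "Div VG EG VH EH D \<phi> r =
     (if r \<in> tri_edges VG EG VH EH D then
        (\<Sum>\<sigma> \<in> {\<sigma> \<in> triangles EG EH D. r \<subseteq> \<sigma>}. \<phi> (the_elem (\<sigma> - r)))
        - (\<Sum>v\<in>r. alpha EG EH D r v * \<phi> v)
      else 0)"

definition prin_tri ::
  "'a set \<Rightarrow> ('a \<Rightarrow> 'a \<Rightarrow> bool) \<Rightarrow> 'b set \<Rightarrow> ('b \<Rightarrow> 'b \<Rightarrow> bool) \<Rightarrow> ('a \<times> 'b) set set
   \<Rightarrow> (('a \<times> 'b) set \<Rightarrow> int) set" where
  "prin_tri VG EG VH EH D = {Div VG EG VH EH D \<phi> | \<phi>. \<phi> \<in> {\<phi>. \<forall>v. v \<notin> tri_vertices VG VH \<longrightarrow> \<phi> v = 0}}"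

text \<open>beta(C,D'): C(a) on vertical edges {(a,b),(a,y)}, D'(b) on horizontal edges
  {(a,b),(x,b)}, 0 on diagonal edges (and off the edge set).\<close>
definition beta ::
  "'a set \<Rightarrow> ('a \<Rightarrow> 'a \<Rightarrow> bool) \<Rightarrow> 'b set \<Rightarrow> ('b \<Rightarrow> 'b \<Rightarrow> bool)
   \<Rightarrow> ('a \<Rightarrow> int) \<Rightarrow> ('b \<Rightarrow> int) \<Rightarrow> ('a \<times> 'b) set \<Rightarrow> int" where
  "beta VG EG VH EH C D' r =
     (if r \<in> vert_edges VG EH then C (fst (SOME p. p \<in> r))
      else if r \<in> horiz_edges EG VH then D' (snd (SOME p. p \<in> r))
      else 0)"

end

theory Submission
  imports Defs
begin

definition vtri :: "('a \<times> 'b) set set \<Rightarrow> 'a \<Rightarrow> 'b \<Rightarrow> 'b \<Rightarrow> 'a \<Rightarrow> ('a \<times> 'b) set" where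
  "vtri D a b y x = (if {(a,b),(x,y)} \<in> D then {(a,b),(x,y),(a,y)} else {(x,b),(a,y),(a,b)})"

definition htri :: "('a \<times> 'b) set set \<Rightarrow> 'a \<Rightarrow> 'a \<Rightarrow> 'b \<Rightarrow> 'b \<Rightarrow> ('a \<times> 'b) set" where
  "htri D a x b y = (if {(a,b),(x,y)} \<in> D then {(a,b),(x,y),(x,b)} else {(x,b),(a,y),(a,b)})"

definition phi :: "'a set \<Rightarrow> 'b set \<Rightarrow> ('a \<Rightarrow> int) \<Rightarrow> ('b \<Rightarrow> int) \<Rightarrow> 'a \<times> 'b \<Rightarrow> int" where
  "phi VG VH c d p = (if p \<in> VG \<times> VH then c (fst p) + d (snd p) else 0)"

context
  fixes VG :: "'a set" and EG :: "'a \<Rightarrow> 'a \<Rightarrow> bool"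
    and VH :: "'b set" and EH :: "'b \<Rightarrow> 'b \<Rightarrow> bool"
    and D :: "('a \<times> 'b) set set"
  assumes sg: "simple_graph VG EG" and sh: "simple_graph VH EH"
    and tr: "triangulation VG EG VH EH D"
begin

lemma EGn: "EG a x \<Longrightarrow> a \<in> VG \<and> x \<in> VG \<and> a \<noteq> x"
  using sg unfolding simple_graph_def by metis
lemma EHn: "EH a x \<Longrightarrow> a \<in> VH \<and> x \<in> VH \<and> a \<noteq> x"
  using sh unfolding simple_graph_def by metis
lemma EG_sym: "EG a x \<Longrightarrow> EG x a"
  using sg unfolding simple_graph_def by metis
lemma EH_sym: "EH a x \<Longrightarrow> EH x a"
  using sh unfolding simple_graph_def by metis

lemma EG: "EG a x \<Longrightarrow> a \<in> VG \<and> x \<in> VG \<and> EG x a \<and> a \<noteq> x"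
  using sg unfolding simple_graph_def by metis
lemma EH: "EH a x \<Longrightarrow> a \<in> VH \<and> x \<in> VH \<and> EH x a \<and> a \<noteq> x"
  using sh unfolding simple_graph_def by metis

lemma D_form: "d \<in> D \<Longrightarrow> \<exists>a x b y. d = {(a,b),(x,y)} \<and> EG a x \<and> EH b y"
  using tr unfolding triangulation_def by blast

lemma tri_iff: "EG a x \<Longrightarrow> EH b y \<Longrightarrow> ({(a,b),(x,y)} \<in> D \<longleftrightarrow> {(x,b),(a,y)} \<notin> D)"
  using tr unfolding triangulation_def by blast

lemma triangles_form:
  assumes "\<sigma> \<in> triangles EG EH D"
  shows "\<exists>a x b y. EG a x \<and> EH b y \<and> {(a,b),(x,y)} \<in> D \<and>
     (\<sigma> = {(a,b),(x,y),(x,b)} \<or> \<sigma> = {(a,b),(x,y),(a,y)})"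
proof -
  obtain p d a' x' b' y' where d: "d \<in> D" and s: "\<sigma> = insert p d" and e: "EG a' x'" "EH b' y'"
    and sub: "d \<subseteq> {(a',b'),(x',b'),(x',y'),(a',y')}" and p: "p \<in> {(a',b'),(x',b'),(x',y'),(a',y')} - d"
    using assms unfolding triangles_def by blast
  obtain a1 x1 b1 y1 where d1: "d = {(a1,b1),(x1,y1)}" and e1: "EG a1 x1" "EH b1 y1"
    using D_form[OF d] by blast
  have n: "a1 \<noteq> x1" "b1 \<noteq> y1" "a' \<noteq> x'" "b' \<noteq> y'" using EGn EHn e e1 by auto
  have "a1 \<in> {a',x'}" "x1 \<in> {a',x'}" "b1 \<in> {b',y'}" "y1 \<in> {b',y'}"
    using sub unfolding d1 by auto
  then have A: "{a1,x1} = {a',x'}" and B: "{b1,y1} = {b',y'}" using n by auto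
  obtain pa pb where pp: "p = (pa,pb)" by fastforce
  have "pa \<in> {a1,x1}" "pb \<in> {b1,y1}" using p A B unfolding pp by auto
  moreover have "p \<notin> d" using p by auto
  ultimately have "p \<in> {(x1,b1),(a1,y1)}" unfolding pp d1 by auto
  then show ?thesis using d d1 e1 s by auto
qed

lemma triangles_intro:
  assumes "EG a x" "EH b y" "{(a,b),(x,y)} \<in> D" "p \<in> {(x,b),(a,y)}"
  shows "insert p {(a,b),(x,y)} \<in> triangles EG EH D"
proof -
  have n: "a \<noteq> x" "b \<noteq> y" using EGn EHn assms by auto
  have s: "{(a,b),(x,y)} \<subseteq> {(a,b),(x,b),(x,y),(a,y)}"
     "p \<in> {(a,b),(x,b),(x,y),(a,y)} - {(a,b),(x,y)}" using assms n by auto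
  have ex: "\<exists>a' x' b' y'. EG a' x' \<and> EH b' y' \<and> {(a,b),(x,y)} \<subseteq> {(a',b'),(x',b'),(x',y'),(a',y')} \<and>
      p \<in> {(a',b'),(x',b'),(x',y'),(a',y')} - {(a,b),(x,y)}"
    by (intro exI conjI) (rule assms(1), rule assms(2), rule s(1), rule s(2))
  show ?thesis unfolding triangles_def mem_Collect_eq
    by (rule exI[of _ p], rule exI[of _ "{(a,b),(x,y)}"], intro conjI refl assms(3) ex)
qed

lemma diag_eq:
  assumes "EG a x" "EH b y" "{(a,b),(x,y)} \<in> D" "p \<in> {(x,b),(a,y)}"
  shows "diag D (insert p {(a,b),(x,y)}) = {(a,b),(x,y)}"
  unfolding diag_def
proof (rule the_equality)
  show "{(a,b),(x,y)} \<in> D \<and> {(a,b),(x,y)} \<subseteq> insert p {(a,b),(x,y)}" using assms(3) by blast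
  fix d assume d: "d \<in> D \<and> d \<subseteq> insert p {(a, b), (x, y)}"
  obtain a1 x1 b1 y1 where d1: "d = {(a1,b1),(x1,y1)}" and e1: "EG a1 x1" "EH b1 y1"
    using D_form[OF conjunct1[OF d]] by blast
  have n: "a1 \<noteq> x1" "b1 \<noteq> y1" "a \<noteq> x" "b \<noteq> y" using EGn[OF assms(1)] EHn[OF assms(2)] EGn[OF e1(1)] EHn[OF e1(2)] by auto
  have "(a1,b1) \<in> {p,(a,b),(x,y)}" "(x1,y1) \<in> {p,(a,b),(x,y)}" using d unfolding d1 by auto
  then show "d = {(a,b),(x,y)}" using n assms(4) unfolding d1 by auto
qed


lemma Div_nondiag:
  assumes "r \<in> tri_edges VG EG VH EH D" "r \<notin> D" "finite r" "finite T"
    "T = {\<sigma> \<in> triangles EG EH D. r \<subseteq> \<sigma>}"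
  shows "Div VG EG VH EH D \<phi> r =
    (\<Sum>\<sigma>\<in>T. \<phi> (the_elem (\<sigma> - r)) - (\<Sum>v\<in>{v\<in>r. v \<notin> diag D \<sigma>}. \<phi> v))"
proof -
  have "(\<Sum>v\<in>r. alpha EG EH D r v * \<phi> v) = (\<Sum>v\<in>r. \<Sum>\<sigma>\<in>{\<sigma>\<in>T. v \<notin> diag D \<sigma>}. \<phi> v)"
  proof (rule sum.cong[OF refl])
    fix v assume v: "v \<in> r"
    have "{\<sigma> \<in> triangles EG EH D. r \<subseteq> \<sigma> \<and> v \<notin> diag D \<sigma>} = {\<sigma>\<in>T. v \<notin> diag D \<sigma>}"
      using assms(5) by auto
    then show "alpha EG EH D r v * \<phi> v = (\<Sum>\<sigma>\<in>{\<sigma>\<in>T. v \<notin> diag D \<sigma>}. \<phi> v)"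
      using v assms(2) by (simp add: alpha_def)
  qed
  also have "\<dots> = (\<Sum>\<sigma>\<in>T. \<Sum>v\<in>{v\<in>r. v \<notin> diag D \<sigma>}. \<phi> v)"
    by (rule sum.swap_restrict) (use assms in auto)
  finally show ?thesis using assms(1,5) unfolding Div_def by (simp add: sum_subtractf)
qed

lemma vtri_fst: "p \<in> vtri D a b y x \<Longrightarrow> fst p \<in> {a,x}"
  unfolding vtri_def by (auto split: if_splits)
lemma vtri_has: "\<exists>q\<in>vtri D a b y x. fst q = x"
  unfolding vtri_def by auto

lemma vtri_inj: "inj_on (vtri D a b y) {x. EG a x}"
proof (rule inj_onI)
  fix x x' assume x: "x \<in> {x. EG a x}" and x': "x' \<in> {x. EG a x}" and e: "vtri D a b y x = vtri D a b y x'"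
  obtain q where "q \<in> vtri D a b y x" "fst q = x" using vtri_has by blast
  then have "x \<in> {a,x'}" using vtri_fst e by metis
  then show "x = x'" using x EGn by auto
qed

lemma vert_T:
  assumes a: "a \<in> VG" and hby: "EH b y"
  shows "{\<sigma>\<in>triangles EG EH D. {(a,b),(a,y)} \<subseteq> \<sigma>} = vtri D a b y ` {x. EG a x}"
proof (intro equalityI subsetI)
  fix \<sigma> assume "\<sigma> \<in> vtri D a b y ` {x. EG a x}"
  then obtain x where ax: "EG a x" and s: "\<sigma> = vtri D a b y x" by blast
  show "\<sigma> \<in> {\<sigma>\<in>triangles EG EH D. {(a,b),(a,y)} \<subseteq> \<sigma>}"
  proof (cases "{(a,b),(x,y)} \<in> D")
    case True
    then have "insert (a,y) {(a,b),(x,y)} \<in> triangles EG EH D"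
      using triangles_intro[OF ax hby True] by auto
    then show ?thesis using True s unfolding vtri_def by (auto simp: insert_commute)
  next
    case False
    then have D2: "{(x,b),(a,y)} \<in> D" using tri_iff[OF ax hby] by auto
    have "EG x a" using EG_sym[OF ax] by auto
    then have "insert (a,b) {(x,b),(a,y)} \<in> triangles EG EH D"
      using triangles_intro[OF _ hby D2] by auto
    then show ?thesis using False s unfolding vtri_def by (auto simp: insert_commute)
  qed
next
  fix \<sigma> assume "\<sigma> \<in> {\<sigma>\<in>triangles EG EH D. {(a,b),(a,y)} \<subseteq> \<sigma>}"
  then have st: "\<sigma> \<in> triangles EG EH D" and sub: "{(a,b),(a,y)} \<subseteq> \<sigma>" by auto
  obtain a1 x1 b1 y1 where e: "EG a1 x1" "EH b1 y1" and dD: "{(a1,b1),(x1,y1)} \<in> D"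
    and cs: "\<sigma> = {(a1,b1),(x1,y1),(x1,b1)} \<or> \<sigma> = {(a1,b1),(x1,y1),(a1,y1)}"
    using triangles_form[OF st] by blast
  have n: "a1 \<noteq> x1" "b1 \<noteq> y1" "b \<noteq> y" using e EGn EHn hby by auto
  from cs show "\<sigma> \<in> vtri D a b y ` {x. EG a x}"
  proof
    assume s: "\<sigma> = {(a1,b1),(x1,y1),(x1,b1)}"
    have ax: "a = x1" and bb: "(b = b1 \<and> y = y1) \<or> (b = y1 \<and> y = b1)" using sub n unfolding s by auto
    have e': "EG a a1" using EG_sym[OF e(1)] ax by simp
    have "\<sigma> = vtri D a b y a1"
    proof (cases "b = b1 \<and> y = y1")
      case True
      then have "{(a,b),(a1,y)} \<notin> D" using tri_iff[OF e' hby] dD ax by auto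
      then show ?thesis using True ax s unfolding vtri_def by (auto simp: insert_commute)
    next
      case False
      then have "{(a,b),(a1,y)} \<in> D" using bb dD ax by (auto simp: insert_commute)
      then show ?thesis using False bb ax s unfolding vtri_def by (auto simp: insert_commute)
    qed
    then show ?thesis using e' by blast
  next
    assume s: "\<sigma> = {(a1,b1),(x1,y1),(a1,y1)}"
    have ax: "a = a1" and bb: "(b = b1 \<and> y = y1) \<or> (b = y1 \<and> y = b1)" using sub n unfolding s by auto
    have e': "EG a x1" using e(1) ax by simp
    have "\<sigma> = vtri D a b y x1"
    proof (cases "b = b1 \<and> y = y1")
      case True
      then show ?thesis using dD ax s unfolding vtri_def by (auto simp: insert_commute)
    next
      case False
      then have "{(x1,b),(a,y)} \<in> D" using bb dD ax by (auto simp: insert_commute)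
      then have "{(a,b),(x1,y)} \<notin> D" using tri_iff[OF e' hby] by auto
      then show ?thesis using False bb ax s unfolding vtri_def by (auto simp: insert_commute)
    qed
    then show ?thesis using e' by blast
  qed
qed


lemma finN: "finite {x. EG a x}"
proof -
  have "{x. EG a x} \<subseteq> VG" using EGn by auto
  moreover have "finite VG" using sg unfolding simple_graph_def by auto
  ultimately show ?thesis by (rule finite_subset)
qed

lemma vert_not_D: "{(a,b),(a,y)} \<notin> D"
proof
  assume "{(a,b),(a,y)} \<in> D"
  then obtain a1 x1 b1 y1 where d: "{(a,b),(a,y)} = {(a1,b1),(x1,y1)}" and e: "EG a1 x1"
    using D_form by blast
  then have "a1 \<noteq> x1" using EGn by auto
  then show False using d by (auto simp: doubleton_eq_iff)
qed

lemma vert_div: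
  assumes a: "a \<in> VG" and hby: "EH b y"
  shows "Div VG EG VH EH D (phi VG VH c d) {(a,b),(a,y)} = (\<Sum>x\<in>{x. EG a x}. c x - c a)"
proof -
  let ?r = "{(a,b),(a,y)}"
  have re: "?r \<in> tri_edges VG EG VH EH D"
    unfolding tri_edges_def vert_edges_def using a hby by blast
  have n: "b \<noteq> y" "b \<in> VH" "y \<in> VH" using EHn hby by auto
  have "Div VG EG VH EH D (phi VG VH c d) ?r =
    (\<Sum>\<sigma>\<in>vtri D a b y ` {x. EG a x}. phi VG VH c d (the_elem (\<sigma> - ?r))
       - (\<Sum>v\<in>{v\<in>?r. v \<notin> diag D \<sigma>}. phi VG VH c d v))"
    by (rule Div_nondiag[OF re vert_not_D]) (use finN vert_T[OF a hby] in auto)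
  also have "\<dots> = (\<Sum>x\<in>{x. EG a x}. c x - c a)"
    unfolding sum.reindex[OF vtri_inj] o_def
  proof (rule sum.cong[OF refl])
    fix x assume "x \<in> {x. EG a x}"
    then have ax: "EG a x" by simp
    then have nx: "a \<noteq> x" "x \<in> VG" using EGn by auto
    show "phi VG VH c d (the_elem (vtri D a b y x - ?r)) -
        (\<Sum>v\<in>{v\<in>?r. v \<notin> diag D (vtri D a b y x)}. phi VG VH c d v) = c x - c a"
    proof (cases "{(a,b),(x,y)} \<in> D")
      case True
      have dg: "diag D (insert (a,y) {(a,b),(x,y)}) = {(a,b),(x,y)}"
        by (rule diag_eq[OF ax hby True]) auto
      have v: "vtri D a b y x = insert (a,y) {(a,b),(x,y)}" using True unfolding vtri_def by auto
      have s1: "vtri D a b y x - ?r = {(x,y)}" using True nx n unfolding vtri_def by auto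
      have s2: "{v\<in>?r. v \<notin> {(a,b),(x,y)}} = {(a,y)}" using nx n by auto
      have t1: "the_elem (vtri D a b y x - ?r) = (x,y)" using s1 by simp
      have t2: "{v\<in>?r. v \<notin> diag D (vtri D a b y x)} = {(a,y)}" using v dg s2 by simp
      show ?thesis unfolding t1 t2 using a nx n by (simp add: phi_def)
    next
      case False
      then have D2: "{(x,b),(a,y)} \<in> D" using tri_iff[OF ax hby] by auto
      have xa: "EG x a" using EG_sym[OF ax] by auto
      have dg: "diag D (insert (a,b) {(x,b),(a,y)}) = {(x,b),(a,y)}"
        by (rule diag_eq[OF xa hby D2]) auto
      have v: "vtri D a b y x = insert (a,b) {(x,b),(a,y)}" using False unfolding vtri_def by auto
      have s1: "vtri D a b y x - ?r = {(x,b)}" using False nx n unfolding vtri_def by auto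
      have s2: "{v\<in>?r. v \<notin> {(x,b),(a,y)}} = {(a,b)}" using nx n by auto
      have t1: "the_elem (vtri D a b y x - ?r) = (x,b)" using s1 by simp
      have t2: "{v\<in>?r. v \<notin> diag D (vtri D a b y x)} = {(a,b)}" using v dg s2 by simp
      show ?thesis unfolding t1 t2 using a nx n by (simp add: phi_def)
    qed
  qed
  finally show ?thesis .
qed

lemma lap_sum:
  assumes a: "a \<in> VG"
  shows "(\<Sum>w\<in>VG. laplacian VG EG a w * c w) = (\<Sum>x\<in>{x. EG a x}. c x - c a)"
proof -
  have fin: "finite VG" using sg unfolding simple_graph_def by auto
  have N: "{w\<in>VG. EG a w} = {x. EG a x}" using EGn by auto
  have "(\<Sum>w\<in>VG. laplacian VG EG a w * c w) =
     (\<Sum>w\<in>VG. (if w = a then - int (degree VG EG a) * c a else 0) + (if EG a w then c w else 0))"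
    by (rule sum.cong[OF refl]) (use EG in \<open>auto simp: laplacian_def\<close>)
  also have "\<dots> = - int (degree VG EG a) * c a + (\<Sum>w\<in>{w\<in>VG. EG a w}. c w)"
    using fin a by (simp add: sum.distrib sum.inter_filter[symmetric])
  also have "\<dots> = (\<Sum>x\<in>{x. EG a x}. c x - c a)"
    unfolding N by (simp add: sum_subtractf degree_def N)
  finally show ?thesis .
qed


lemma htri_snd: "p \<in> htri D a x b y \<Longrightarrow> snd p \<in> {b,y}"
  unfolding htri_def by (auto split: if_splits)
lemma htri_has: "\<exists>q\<in>htri D a x b y. snd q = y"
  unfolding htri_def by auto

lemma htri_inj: "inj_on (htri D a x b) {y. EH b y}"
proof (rule inj_onI)
  fix y y' assume y: "y \<in> {y. EH b y}" and y': "y' \<in> {y. EH b y}" and e: "htri D a x b y = htri D a x b y'"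
  obtain q where "q \<in> htri D a x b y" "snd q = y" using htri_has by blast
  then have "y \<in> {b,y'}" using htri_snd e by metis
  then show "y = y'" using y EHn by auto
qed

lemma horiz_T:
  assumes hax: "EG a x" and b: "b \<in> VH"
  shows "{\<sigma>\<in>triangles EG EH D. {(a,b),(x,b)} \<subseteq> \<sigma>} = htri D a x b ` {y. EH b y}"
proof (intro equalityI subsetI)
  fix \<sigma> assume "\<sigma> \<in> htri D a x b ` {y. EH b y}"
  then obtain y where hby: "EH b y" and s: "\<sigma> = htri D a x b y" by blast
  show "\<sigma> \<in> {\<sigma>\<in>triangles EG EH D. {(a,b),(x,b)} \<subseteq> \<sigma>}"
  proof (cases "{(a,b),(x,y)} \<in> D")
    case True
    then have "insert (x,b) {(a,b),(x,y)} \<in> triangles EG EH D"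
      using triangles_intro[OF hax hby True] by auto
    then show ?thesis using True s unfolding htri_def by (auto simp: insert_commute)
  next
    case False
    then have D2: "{(x,b),(a,y)} \<in> D" using tri_iff[OF hax hby] by auto
    have "EG x a" using EG_sym[OF hax] by auto
    then have "insert (a,b) {(x,b),(a,y)} \<in> triangles EG EH D"
      using triangles_intro[OF _ hby D2] by auto
    then show ?thesis using False s unfolding htri_def by (auto simp: insert_commute)
  qed
next
  fix \<sigma> assume "\<sigma> \<in> {\<sigma>\<in>triangles EG EH D. {(a,b),(x,b)} \<subseteq> \<sigma>}"
  then have st: "\<sigma> \<in> triangles EG EH D" and sub: "{(a,b),(x,b)} \<subseteq> \<sigma>" by auto
  obtain a1 x1 b1 y1 where e: "EG a1 x1" "EH b1 y1" and dD: "{(a1,b1),(x1,y1)} \<in> D"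
    and cs: "\<sigma> = {(a1,b1),(x1,y1),(x1,b1)} \<or> \<sigma> = {(a1,b1),(x1,y1),(a1,y1)}"
    using triangles_form[OF st] by blast
  have n: "a1 \<noteq> x1" "b1 \<noteq> y1" "a \<noteq> x" using e EGn EHn hax by auto
  from cs show "\<sigma> \<in> htri D a x b ` {y. EH b y}"
  proof
    assume s: "\<sigma> = {(a1,b1),(x1,y1),(x1,b1)}"
    have bb: "b = b1" and aa: "(a = a1 \<and> x = x1) \<or> (a = x1 \<and> x = a1)" using sub n unfolding s by auto
    have e': "EH b y1" using e bb by auto
    have "\<sigma> = htri D a x b y1"
    proof (cases "a = a1 \<and> x = x1")
      case True
      then show ?thesis using dD bb s unfolding htri_def by (auto simp: insert_commute)
    next
      case False
      then have "{(x,b),(a,y1)} \<in> D" using aa dD bb by (auto simp: insert_commute)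
      then have "{(a,b),(x,y1)} \<notin> D" using tri_iff[OF hax e'] by auto
      then show ?thesis using False aa bb s unfolding htri_def by (auto simp: insert_commute)
    qed
    then show ?thesis using e' by blast
  next
    assume s: "\<sigma> = {(a1,b1),(x1,y1),(a1,y1)}"
    have bb: "b = y1" and aa: "(a = a1 \<and> x = x1) \<or> (a = x1 \<and> x = a1)" using sub n unfolding s by auto
    have e': "EH b b1" using EH_sym[OF e(2)] bb by simp
    have "\<sigma> = htri D a x b b1"
    proof (cases "a = a1 \<and> x = x1")
      case True
      then have "{(x,b),(a,b1)} \<in> D" using dD bb by (auto simp: insert_commute)
      then have "{(a,b),(x,b1)} \<notin> D" using tri_iff[OF hax e'] by auto
      then show ?thesis using True bb s unfolding htri_def by (auto simp: insert_commute)
    next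
      case False
      then have "{(a,b),(x,b1)} \<in> D" using aa dD bb by (auto simp: insert_commute)
      then show ?thesis using False aa bb s unfolding htri_def by (auto simp: insert_commute)
    qed
    then show ?thesis using e' by blast
  qed
qed

lemma finNH: "finite {y. EH b y}"
proof -
  have "{y. EH b y} \<subseteq> VH" using EHn by auto
  moreover have "finite VH" using sh unfolding simple_graph_def by auto
  ultimately show ?thesis by (rule finite_subset)
qed

lemma horiz_not_D: "{(a,b),(x,b)} \<notin> D"
proof
  assume "{(a,b),(x,b)} \<in> D"
  then obtain a1 x1 b1 y1 where d: "{(a,b),(x,b)} = {(a1,b1),(x1,y1)}" and e: "EH b1 y1"
    using D_form by blast
  then have "b1 \<noteq> y1" using EHn by auto
  then show False using d by (auto simp: doubleton_eq_iff)
qed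

lemma horiz_div:
  assumes hax: "EG a x" and b: "b \<in> VH"
  shows "Div VG EG VH EH D (phi VG VH c d) {(a,b),(x,b)} = (\<Sum>y\<in>{y. EH b y}. d y - d b)"
proof -
  let ?r = "{(a,b),(x,b)}"
  have re: "?r \<in> tri_edges VG EG VH EH D"
    unfolding tri_edges_def horiz_edges_def using b hax by blast
  have n: "a \<noteq> x" "a \<in> VG" "x \<in> VG" using EGn hax by auto
  have "Div VG EG VH EH D (phi VG VH c d) ?r =
    (\<Sum>\<sigma>\<in>htri D a x b ` {y. EH b y}. phi VG VH c d (the_elem (\<sigma> - ?r))
       - (\<Sum>v\<in>{v\<in>?r. v \<notin> diag D \<sigma>}. phi VG VH c d v))"
    by (rule Div_nondiag[OF re horiz_not_D]) (use finNH horiz_T[OF hax b] in auto)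
  also have "\<dots> = (\<Sum>y\<in>{y. EH b y}. d y - d b)"
    unfolding sum.reindex[OF htri_inj] o_def
  proof (rule sum.cong[OF refl])
    fix y assume "y \<in> {y. EH b y}"
    then have hby: "EH b y" by simp
    then have ny: "b \<noteq> y" "y \<in> VH" using EHn by auto
    show "phi VG VH c d (the_elem (htri D a x b y - ?r)) -
        (\<Sum>v\<in>{v\<in>?r. v \<notin> diag D (htri D a x b y)}. phi VG VH c d v) = d y - d b"
    proof (cases "{(a,b),(x,y)} \<in> D")
      case True
      have dg: "diag D (insert (x,b) {(a,b),(x,y)}) = {(a,b),(x,y)}"
        by (rule diag_eq[OF hax hby True]) auto
      have v: "htri D a x b y = insert (x,b) {(a,b),(x,y)}" using True unfolding htri_def by auto
      have s1: "htri D a x b y - ?r = {(x,y)}" using True ny n unfolding htri_def by auto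
      have s2: "{v\<in>?r. v \<notin> {(a,b),(x,y)}} = {(x,b)}" using ny n by auto
      have t1: "the_elem (htri D a x b y - ?r) = (x,y)" using s1 by simp
      have t2: "{v\<in>?r. v \<notin> diag D (htri D a x b y)} = {(x,b)}" using v dg s2 by simp
      show ?thesis unfolding t1 t2 using b ny n by (simp add: phi_def)
    next
      case False
      then have D2: "{(x,b),(a,y)} \<in> D" using tri_iff[OF hax hby] by auto
      have xa: "EG x a" using EG_sym[OF hax] by auto
      have dg: "diag D (insert (a,b) {(x,b),(a,y)}) = {(x,b),(a,y)}"
        by (rule diag_eq[OF xa hby D2]) auto
      have v: "htri D a x b y = insert (a,b) {(x,b),(a,y)}" using False unfolding htri_def by auto
      have s1: "htri D a x b y - ?r = {(a,y)}" using False ny n unfolding htri_def by auto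
      have s2: "{v\<in>?r. v \<notin> {(x,b),(a,y)}} = {(a,b)}" using ny n by auto
      have t1: "the_elem (htri D a x b y - ?r) = (a,y)" using s1 by simp
      have t2: "{v\<in>?r. v \<notin> diag D (htri D a x b y)} = {(a,b)}" using v dg s2 by simp
      show ?thesis unfolding t1 t2 using b ny n by (simp add: phi_def)
    qed
  qed
  finally show ?thesis .
qed


lemma lap_sumH:
  assumes a: "b \<in> VH"
  shows "(\<Sum>w\<in>VH. laplacian VH EH b w * d w) = (\<Sum>y\<in>{y. EH b y}. d y - d b)"
proof -
  have fin: "finite VH" using sh unfolding simple_graph_def by auto
  have N: "{w\<in>VH. EH b w} = {x. EH b x}" using EHn by auto
  have "(\<Sum>w\<in>VH. laplacian VH EH b w * d w) =
     (\<Sum>w\<in>VH. (if w = b then - int (degree VH EH b) * d b else 0) + (if EH b w then d w else 0))"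
    by (rule sum.cong[OF refl]) (use EH in \<open>auto simp: laplacian_def\<close>)
  also have "\<dots> = - int (degree VH EH b) * d b + (\<Sum>w\<in>{w\<in>VH. EH b w}. d w)"
    using fin a by (simp add: sum.distrib sum.inter_filter[symmetric])
  also have "\<dots> = (\<Sum>y\<in>{y. EH b y}. d y - d b)"
    unfolding N by (simp add: sum_subtractf degree_def N)
  finally show ?thesis .
qed

lemma diag_T:
  assumes hax: "EG a x" and hby: "EH b y" and r: "{(a,b),(x,y)} \<in> D"
  shows "{\<sigma>\<in>triangles EG EH D. {(a,b),(x,y)} \<subseteq> \<sigma>} = {insert (x,b) {(a,b),(x,y)}, insert (a,y) {(a,b),(x,y)}}"
proof (intro equalityI subsetI)
  fix \<sigma> assume "\<sigma> \<in> {insert (x,b) {(a,b),(x,y)}, insert (a,y) {(a,b),(x,y)}}"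
  then show "\<sigma> \<in> {\<sigma>\<in>triangles EG EH D. {(a,b),(x,y)} \<subseteq> \<sigma>}"
    using triangles_intro[OF hax hby r] by auto
next
  fix \<sigma> assume "\<sigma> \<in> {\<sigma>\<in>triangles EG EH D. {(a,b),(x,y)} \<subseteq> \<sigma>}"
  then have st: "\<sigma> \<in> triangles EG EH D" and sub: "{(a,b),(x,y)} \<subseteq> \<sigma>" by auto
  obtain a1 x1 b1 y1 where e: "EG a1 x1" "EH b1 y1"
    and cs: "\<sigma> = {(a1,b1),(x1,y1),(x1,b1)} \<or> \<sigma> = {(a1,b1),(x1,y1),(a1,y1)}"
    using triangles_form[OF st] by blast
  have n: "a1 \<noteq> x1" "b1 \<noteq> y1" "a \<noteq> x" "b \<noteq> y" using e EGn EHn hax hby by auto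
  from cs show "\<sigma> \<in> {insert (x,b) {(a,b),(x,y)}, insert (a,y) {(a,b),(x,y)}}"
  proof
    assume s: "\<sigma> = {(a1,b1),(x1,y1),(x1,b1)}"
    have "((a,b) = (a1,b1) \<and> (x,y) = (x1,y1)) \<or> ((a,b) = (x1,y1) \<and> (x,y) = (a1,b1))"
      using sub n unfolding s by auto
    then show ?thesis using s by (auto simp: insert_commute)
  next
    assume s: "\<sigma> = {(a1,b1),(x1,y1),(a1,y1)}"
    have "((a,b) = (a1,b1) \<and> (x,y) = (x1,y1)) \<or> ((a,b) = (x1,y1) \<and> (x,y) = (a1,b1))"
      using sub n unfolding s by auto
    then show ?thesis using s by (auto simp: insert_commute)
  qed
qed

lemma diag_div:
  assumes hax: "EG a x" and hby: "EH b y" and r: "{(a,b),(x,y)} \<in> D"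
  shows "Div VG EG VH EH D (phi VG VH c d) {(a,b),(x,y)} = 0"
proof -
  let ?r = "{(a,b),(x,y)}"
  have n: "a \<noteq> x" "b \<noteq> y" "a \<in> VG" "x \<in> VG" "b \<in> VH" "y \<in> VH" using EGn EHn hax hby by auto
  have re: "?r \<in> tri_edges VG EG VH EH D" unfolding tri_edges_def using r by blast
  have ne: "insert (x,b) ?r \<noteq> insert (a,y) ?r" using n by auto
  have t1: "the_elem (insert (x,b) ?r - ?r) = (x,b)"
  proof -
    have "insert (x,b) ?r - ?r = {(x,b)}" using n by auto
    then show ?thesis by simp
  qed
  have t2: "the_elem (insert (a,y) ?r - ?r) = (a,y)"
  proof -
    have "insert (a,y) ?r - ?r = {(a,y)}" using n by auto
    then show ?thesis by simp
  qed
  have al: "\<And>v. v \<in> ?r \<Longrightarrow> alpha EG EH D ?r v = 1" using r by (simp add: alpha_def)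
  have "(\<Sum>v\<in>?r. alpha EG EH D ?r v * phi VG VH c d v) = (\<Sum>v\<in>?r. phi VG VH c d v)"
    by (rule sum.cong) (auto simp: al)
  then show ?thesis unfolding Div_def using re diag_T[OF hax hby r] ne t1 t2 n
    by (simp add: phi_def)
qed

end

theorem mainTheorem3:
  fixes VG :: "'a set" and EG :: "'a \<Rightarrow> 'a \<Rightarrow> bool"
    and VH :: "'b set" and EH :: "'b \<Rightarrow> 'b \<Rightarrow> bool"
    and D :: "('a \<times> 'b) set set"
  assumes "simple_graph VG EG" and "connected_graph VG EG"
    and "simple_graph VH EH" and "connected_graph VH EH"
    and "triangulation VG EG VH EH D"
  shows "\<forall>C \<in> prin_graph VG EG. \<forall>D' \<in> prin_graph VH EH.
           beta VG EG VH EH C D' \<in> prin_tri VG EG VH EH D"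
proof (intro ballI)
  note sg = assms(1) and sh = assms(3) and tr = assms(5)
  fix C D' assume "C \<in> prin_graph VG EG" "D' \<in> prin_graph VH EH"
  then obtain c d where hc: "\<And>v. C v = (if v \<in> VG then (\<Sum>w\<in>VG. laplacian VG EG v w * c w) else 0)"
    and hd: "\<And>v. D' v = (if v \<in> VH then (\<Sum>w\<in>VH. laplacian VH EH v w * d w) else 0)"
    unfolding prin_graph_def by blast
  let ?\<phi> = "phi VG VH c d"
  have eq: "beta VG EG VH EH C D' r = Div VG EG VH EH D ?\<phi> r" for r
  proof -
    consider (V) "r \<in> vert_edges VG EH" | (H) "r \<notin> vert_edges VG EH" "r \<in> horiz_edges EG VH"
      | (Dg) "r \<notin> vert_edges VG EH" "r \<notin> horiz_edges EG VH" "r \<in> D"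
      | (N) "r \<notin> tri_edges VG EG VH EH D"
      unfolding tri_edges_def by blast
    then show ?thesis
    proof cases
      case V
      then obtain a b y where r: "r = {(a,b),(a,y)}" and a: "a \<in> VG" and hby: "EH b y"
        unfolding vert_edges_def by blast
      have "(SOME p. p \<in> r) \<in> r" by (rule someI[of _ "(a,b)"]) (simp add: r)
      then have "fst (SOME p. p \<in> r) = a" unfolding r by auto
      then have "beta VG EG VH EH C D' r = C a" using V unfolding beta_def by simp
      also have "\<dots> = (\<Sum>x\<in>{x. EG a x}. c x - c a)"
        using hc[of a] a lap_sum[OF sg sh tr a] by simp
      also have "\<dots> = Div VG EG VH EH D ?\<phi> r"
        unfolding r using vert_div[OF sg sh tr a hby] by simp
      finally show ?thesis .
    next
      case H
      then obtain a x b where r: "r = {(a,b),(x,b)}" and hax: "EG a x" and b: "b \<in> VH"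
        unfolding horiz_edges_def by blast
      have "(SOME p. p \<in> r) \<in> r" by (rule someI[of _ "(a,b)"]) (simp add: r)
      then have "snd (SOME p. p \<in> r) = b" unfolding r by auto
      then have "beta VG EG VH EH C D' r = D' b" using H unfolding beta_def by simp
      also have "\<dots> = (\<Sum>y\<in>{y. EH b y}. d y - d b)"
        using hd[of b] b lap_sumH[OF sg sh tr b] by simp
      also have "\<dots> = Div VG EG VH EH D ?\<phi> r"
        unfolding r using horiz_div[OF sg sh tr hax b] by simp
      finally show ?thesis .
    next
      case Dg
      then obtain a x b y where r: "r = {(a,b),(x,y)}" and hax: "EG a x" and hby: "EH b y"
        using D_form[OF sg sh tr] by blast
      have "beta VG EG VH EH C D' r = 0" using Dg unfolding beta_def by simp
      also have "\<dots> = Div VG EG VH EH D ?\<phi> r"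
        unfolding r using diag_div[OF sg sh tr hax hby] Dg(3) r by simp
      finally show ?thesis .
    next
      case N
      then have "r \<notin> vert_edges VG EH" "r \<notin> horiz_edges EG VH" unfolding tri_edges_def by auto
      then show ?thesis using N unfolding beta_def Div_def by simp
    qed
  qed
  have "?\<phi> \<in> {\<phi>. \<forall>v. v \<notin> tri_vertices VG VH \<longrightarrow> \<phi> v = 0}"
    by (simp add: phi_def tri_vertices_def)
  moreover have "beta VG EG VH EH C D' = Div VG EG VH EH D ?\<phi>" using eq by (rule ext)
  ultimately show "beta VG EG VH EH C D' \<in> prin_tri VG EG VH EH D"
    unfolding prin_tri_def by blast
qed

end
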